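(* Let $N\ge0$ be an integer and $a,b,c,z$ complex numbers (or indeterminates) with $z\ne0$ such that all arguments and denominators below are well defined and nonzero. Then \begin{align*} {}_{2}F_{1}^{[N]}\left(\begin{matrix}a,b\\ c\end{matrix};z\right) &=\frac{(b+Nz^{-1}-N)_{N}}{(Nz^{-1}-N)_{N}}\, {}_{2}F_{1}^{[N]}\left(\begin{matrix}c-a,b\\ c\end{matrix};\frac{N}{N-Nz^{-1}+1-b}\right) \\ &=\frac{(a+b-c+Nz^{-1}-N)_{N}}{(Nz^{-1}-N)_{N}}\, {}_{2}F_{1}^{[N]}\left(\begin{matrix}c-a,c-b\\ c\end{matrix};\frac{N}{Nz^{-1}+a+b-c}\right). \end{align*}
   Context: $(x)_m=x(x+1)\cdots(x+m-1)$ is the rising factorial, $(x)_0=1$. For $N\ge0$, \[ {}_{2}F_{1}^{[N]}\left(\begin{matrix}a,b\\ c\end{matrix};z\right)=\sum_{m=0}^{N}\frac{(a)_m(b)_m}{(c)_m\, m!}\,\frac{(N+1-m)_m}{(Nz^{-1}-m)_m}. \] *)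

theory Defs
  imports Complex_Main
begin

definition F21N :: "nat \<Rightarrow> complex \<Rightarrow> complex \<Rightarrow> complex \<Rightarrow> complex \<Rightarrow> complex" where
  "F21N N a b c z =
     (\<Sum>m=0..N. pochhammer a m * pochhammer b m / (pochhammer c m * of_nat (fact m))
        * pochhammer (of_nat (N + 1 - m)) m / pochhammer (of_nat N / z - of_nat m) m)"

end

theory Submission imports Defs "HOL-Computational_Algebra.Formal_Power_Series"
begin

definition G :: "nat \<Rightarrow> complex \<Rightarrow> complex \<Rightarrow> complex \<Rightarrow> complex \<Rightarrow> complex" where
  "G N a b c x = (\<Sum>m=0..N. of_nat (N choose m) * pochhammer a m * pochhammer b m
       / (pochhammer c m * pochhammer (x - of_nat m) m))"

lemma poch_choose:
  assumes "k \<le> n"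
  shows "pochhammer (of_nat (n - k + 1) :: complex) k = fact k * of_nat (n choose k)"
proof -
  have "of_nat (n choose k) = (of_nat n gchoose k :: complex)" by (rule binomial_gbinomial)
  also have "\<dots> = pochhammer (of_nat n - of_nat k + 1) k / fact k" by (rule gbinomial_pochhammer')
  also have "of_nat n - of_nat k + 1 = (of_nat (n - k + 1) :: complex)" using assms by (simp add: of_nat_diff)
  finally show ?thesis by (simp add: field_simps)
qed

lemma F_G: "F21N N a b c z = G N a b c (of_nat N / z)"
  unfolding F21N_def G_def
proof (rule sum.cong[OF refl])
  fix m assume "m \<in> {0..N}"
  then have m: "m \<le> N" by simp
  have "N + 1 - m = N - m + 1" using m by simp
  then have p: "pochhammer (of_nat (N + 1 - m) :: complex) m = fact m * of_nat (N choose m)"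
    using poch_choose[OF m] by simp
  show "pochhammer a m * pochhammer b m / (pochhammer c m * of_nat (fact m)) *
          pochhammer (of_nat (N + 1 - m)) m / pochhammer (of_nat N / z - of_nat m) m =
        of_nat (N choose m) * pochhammer a m * pochhammer b m /
          (pochhammer c m * pochhammer (of_nat N / z - of_nat m) m)"
    unfolding p by (simp add: field_simps of_nat_fact)
qed

lemma G_sym: "G N a b c x = G N b a c x"
  unfolding G_def by (simp add: mult_ac)

lemma poch_neg_zero:
  assumes "m < j"
  shows "pochhammer (- of_nat m :: complex) j = 0"
  using assms by (auto simp: pochhammer_eq_0_iff)

lemma inner:
  fixes b y :: complex
  assumes j: "j \<le> N"
  shows "(\<Sum>m=0..N. of_nat (N choose m) * pochhammer (- of_nat m) j * pochhammer b m * pochhammer y (N - m))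
     = (-1)^j * (fact j * of_nat (N choose j)) * pochhammer b j * pochhammer (b + of_nat j + y) (N - j)"
    (is "?L = ?R")
proof -
  let ?f = "\<lambda>m. of_nat (N choose m) * pochhammer (- of_nat m) j * pochhammer b m * pochhammer y (N - m) :: complex"
  have "{0..N} = {0..<j} \<union> {j..N}" using j by auto
  then have "?L = sum ?f {0..<j} + sum ?f {j..N}"
    by (simp add: sum.union_disjoint ivl_disj_int)
  also have "sum ?f {0..<j} = 0"
    by (rule sum.neutral) (auto simp: poch_neg_zero)
  also have "sum ?f {j..N} = sum (\<lambda>l. ?f (l + j)) {0..N-j}"
    using sum.shift_bounds_cl_nat_ivl[of ?f 0 j "N-j"] j by simp
  also have "\<dots> = (\<Sum>l=0..N-j. (-1)^j * (fact j * of_nat (N choose j)) * pochhammer b j *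
        (of_nat (N - j choose l) * pochhammer (b + of_nat j) l * pochhammer y (N - j - l)))"
  proof (rule sum.cong[OF refl])
    fix l assume "l \<in> {0..N-j}"
    then have l: "l + j \<le> N" using j by simp
    have e1: "pochhammer (- of_nat (l + j)) j = (-1)^j * (fact j * of_nat ((l + j) choose j) :: complex)"
    proof -
      have "pochhammer (- of_nat (l + j)) j = (-1)^j * pochhammer (of_nat (l + j) - of_nat j + 1 :: complex) j"
        by (rule pochhammer_minus)
      also have "of_nat (l + j) - of_nat j + 1 = (of_nat (l + j - j + 1) :: complex)" by simp
      also have "pochhammer \<dots> j = fact j * of_nat ((l + j) choose j)"
        by (rule poch_choose) simp
      finally show ?thesis .
    qed
    have e2: "pochhammer b (l + j) = pochhammer b j * pochhammer (b + of_nat j) l"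
      using pochhammer_product'[of b j l] by (simp add: add.commute)
    have e3: "(N choose (l + j)) * ((l + j) choose j) = (N choose j) * ((N - j) choose l)"
      using choose_mult[of j "l + j" N] l by simp
    have e3': "of_nat (N choose (l + j)) * of_nat ((l + j) choose j) = (of_nat (N choose j) * of_nat ((N - j) choose l) :: complex)"
      using arg_cong[OF e3, of "of_nat :: nat \<Rightarrow> complex"] by simp
    have e4: "N - (l + j) = N - j - l" by simp
    show "?f (l + j) = (-1)^j * (fact j * of_nat (N choose j)) * pochhammer b j *
        (of_nat (N - j choose l) * pochhammer (b + of_nat j) l * pochhammer y (N - j - l))"
      unfolding e1 e2 e4
      using e3' by (simp add: mult_ac)
  qed
  also have "\<dots> = (-1)^j * (fact j * of_nat (N choose j)) * pochhammer b j *
        (\<Sum>l\<le>N-j. of_nat (N - j choose l) * pochhammer (b + of_nat j) l * pochhammer y (N - j - l))"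
    by (simp add: sum_distrib_left atLeast0AtMost)
  also have "(\<Sum>l\<le>N-j. of_nat (N - j choose l) * pochhammer (b + of_nat j) l * pochhammer y (N - j - l))
      = pochhammer (b + of_nat j + y) (N - j)"
    by (rule pochhammer_binomial_sum[symmetric])
  finally show ?thesis by simp
qed

lemma vander_ext:
  fixes a c :: complex
  assumes hc: "pochhammer c m \<noteq> 0" and m: "m \<le> N"
  shows "pochhammer a m / pochhammer c m =
     (\<Sum>j=0..N. pochhammer (c - a) j * pochhammer (- of_nat m) j / (of_nat (fact j) * pochhammer c j))"
proof -
  have c: "\<forall>i\<in>{0..<m}. c \<noteq> - of_nat i" using hc by (auto simp: pochhammer_eq_0_iff)
  have "pochhammer a m / pochhammer c m = pochhammer (c - (c - a)) m / pochhammer c m" by simp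
  also have "\<dots> = (\<Sum>j=0..m. pochhammer (c - a) j * pochhammer (- of_nat m) j / (of_nat (fact j) * pochhammer c j))"
    using Vandermonde_pochhammer[OF c, of "c - a"] by simp
  also have "\<dots> = (\<Sum>j=0..N. pochhammer (c - a) j * pochhammer (- of_nat m) j / (of_nat (fact j) * pochhammer c j))"
    by (rule sum.mono_neutral_left) (use m in \<open>auto simp: poch_neg_zero\<close>)
  finally show ?thesis .
qed

lemma T1:
  fixes a b c x :: complex
  assumes hc: "\<And>m. m \<le> N \<Longrightarrow> pochhammer c m \<noteq> 0"
    and hx: "pochhammer (x - of_nat N) N \<noteq> 0"
    and hx': "\<And>m. m \<le> N \<Longrightarrow> pochhammer (of_nat N - x + 1 - b - of_nat m) m \<noteq> 0"
  shows "G N a b c x = pochhammer (b + x - of_nat N) N / pochhammer (x - of_nat N) N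
           * G N (c - a) b c (of_nat N - x + 1 - b)"
proof -
  define D where "D = pochhammer (x - of_nat N) N"
  have Dsplit: "D = pochhammer (x - of_nat N) (N - m) * pochhammer (x - of_nat m) m" if m: "m \<le> N" for m
  proof -
    have "D = pochhammer (x - of_nat N) ((N - m) + m)" using m by (simp add: D_def)
    also have "\<dots> = pochhammer (x - of_nat N) (N - m) * pochhammer (x - of_nat N + of_nat (N - m)) m"
      by (rule pochhammer_product')
    also have "x - of_nat N + of_nat (N - m) = x - of_nat m" using m by (simp add: of_nat_diff)
    finally show ?thesis .
  qed
  have D0: "D \<noteq> 0" using hx by (simp add: D_def)
  have xm0: "pochhammer (x - of_nat m) m \<noteq> 0" if "m \<le> N" for m
    using Dsplit[OF that] D0 by auto
  have "D * G N a b c x = (\<Sum>m=0..N. of_nat (N choose m) * pochhammer b m * pochhammer (x - of_nat N) (N - m)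
        * (pochhammer a m / pochhammer c m))"
    unfolding G_def sum_distrib_left
  proof (rule sum.cong[OF refl])
    fix m assume "m \<in> {0..N}" then have m: "m \<le> N" by simp
    show "D * (of_nat (N choose m) * pochhammer a m * pochhammer b m / (pochhammer c m * pochhammer (x - of_nat m) m))
       = of_nat (N choose m) * pochhammer b m * pochhammer (x - of_nat N) (N - m) * (pochhammer a m / pochhammer c m)"
      unfolding Dsplit[OF m] using xm0[OF m] hc[OF m] by (simp add: field_simps)
  qed
  also have "\<dots> = (\<Sum>m=0..N. \<Sum>j=0..N. pochhammer (c - a) j / (of_nat (fact j) * pochhammer c j) *
        (of_nat (N choose m) * pochhammer (- of_nat m) j * pochhammer b m * pochhammer (x - of_nat N) (N - m)))"
    unfolding sum_distrib_left
  proof (rule sum.cong[OF refl])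
    fix m assume "m \<in> {0..N}" then have m: "m \<le> N" by simp
    show "of_nat (N choose m) * pochhammer b m * pochhammer (x - of_nat N) (N - m) * (pochhammer a m / pochhammer c m) =
      (\<Sum>j=0..N. pochhammer (c - a) j / (of_nat (fact j) * pochhammer c j) *
        (of_nat (N choose m) * pochhammer (- of_nat m) j * pochhammer b m * pochhammer (x - of_nat N) (N - m)))"
      unfolding vander_ext[OF hc[OF m] m] sum_distrib_left
      by (rule sum.cong[OF refl]) (simp add: field_simps)
  qed
  also have "\<dots> = (\<Sum>j=0..N. pochhammer (c - a) j / (of_nat (fact j) * pochhammer c j) *
        (\<Sum>m=0..N. of_nat (N choose m) * pochhammer (- of_nat m) j * pochhammer b m * pochhammer (x - of_nat N) (N - m)))"
    by (subst sum.swap) (simp add: sum_distrib_left)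
  also have "\<dots> = (\<Sum>j=0..N. pochhammer (c - a) j / (of_nat (fact j) * pochhammer c j) *
        ((-1)^j * (fact j * of_nat (N choose j)) * pochhammer b j * pochhammer (b + of_nat j + (x - of_nat N)) (N - j)))"
    by (rule sum.cong[OF refl]) (simp add: inner)
  also have "\<dots> = pochhammer (b + x - of_nat N) N * G N (c - a) b c (of_nat N - x + 1 - b)"
    unfolding G_def sum_distrib_left
  proof (rule sum.cong[OF refl])
    fix j assume "j \<in> {0..N}" then have j: "j \<le> N" by simp
    have r1: "pochhammer (of_nat N - x + 1 - b - of_nat j) j = (-1)^j * pochhammer (b + x - of_nat N) j"
    proof -
      have e: "of_nat N - x + 1 - b - of_nat j = (of_nat N - x - b) - of_nat j + 1" by simp
      have "pochhammer (of_nat N - x + 1 - b - of_nat j) j = (-1)^j * pochhammer (- (of_nat N - x - b)) j"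
        unfolding e by (rule pochhammer_minus')
      also have "- (of_nat N - x - b) = b + x - of_nat N" by simp
      finally show ?thesis .
    qed
    have r2: "pochhammer (b + x - of_nat N) N = pochhammer (b + x - of_nat N) j * pochhammer (b + of_nat j + (x - of_nat N)) (N - j)"
    proof -
      have "pochhammer (b + x - of_nat N) N = pochhammer (b + x - of_nat N) j * pochhammer (b + x - of_nat N + of_nat j) (N - j)"
        using pochhammer_product[OF j] by blast
      also have "b + x - of_nat N + of_nat j = b + of_nat j + (x - of_nat N)" by simp
      finally show ?thesis .
    qed
    have nz: "pochhammer (of_nat N - x + 1 - b - of_nat j) j \<noteq> 0" using hx'[OF j] .
    have f0: "(of_nat (fact j) :: complex) \<noteq> 0" by simp
    have s: "(-1::complex)^j * (-1)^j = 1" by (simp flip: power_mult_distrib)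
    show "pochhammer (c - a) j / (of_nat (fact j) * pochhammer c j) *
        ((-1)^j * (fact j * of_nat (N choose j)) * pochhammer b j * pochhammer (b + of_nat j + (x - of_nat N)) (N - j))
      = pochhammer (b + x - of_nat N) N * (of_nat (N choose j) * pochhammer (c - a) j * pochhammer b j /
          (pochhammer c j * pochhammer (of_nat N - x + 1 - b - of_nat j) j))"
      using nz hc[OF j] unfolding r2 r1 using s
      by (simp add: field_simps)
  qed
  finally show ?thesis using D0 unfolding D_def by (simp add: field_simps)
qed

lemma refl_N:
  fixes B :: complex
  shows "pochhammer (B - of_nat N + 1) N = (-1)^N * pochhammer (- B) N"
  by (rule pochhammer_minus')

theorem corollary4p3:
  fixes N :: nat and a b c z :: complex
  assumes hz: "z \<noteq> 0"
    and hc: "\<And>m. m \<le> N \<Longrightarrow> pochhammer c m \<noteq> 0"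
    and hd0: "\<And>m. m \<le> N \<Longrightarrow> pochhammer (of_nat N / z - of_nat m) m \<noteq> 0"
    and hN: "pochhammer (of_nat N / z - of_nat N) N \<noteq> 0"
    and hden1: "of_nat N - of_nat N / z + 1 - b \<noteq> 0"
    and hd1: "\<And>m. m \<le> N \<Longrightarrow>
       pochhammer (of_nat N / (of_nat N / (of_nat N - of_nat N / z + 1 - b)) - of_nat m) m \<noteq> 0"
    and hden2: "of_nat N / z + a + b - c \<noteq> 0"
    and hd2: "\<And>m. m \<le> N \<Longrightarrow>
       pochhammer (of_nat N / (of_nat N / (of_nat N / z + a + b - c)) - of_nat m) m \<noteq> 0"
  shows "F21N N a b c z =
           pochhammer (b + of_nat N / z - of_nat N) N / pochhammer (of_nat N / z - of_nat N) N
           * F21N N (c - a) b c (of_nat N / (of_nat N - of_nat N / z + 1 - b))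
         \<and> F21N N a b c z =
           pochhammer (a + b - c + of_nat N / z - of_nat N) N / pochhammer (of_nat N / z - of_nat N) N
           * F21N N (c - a) (c - b) c (of_nat N / (of_nat N / z + a + b - c))"
proof (cases "N = 0")
  case True
  then show ?thesis by (simp add: F21N_def)
next
  case False
  define x where "x = of_nat N / z"
  define w1 where "w1 = of_nat N - x + 1 - b"
  define w2 where "w2 = x + a + b - c"
  have N0: "(of_nat N :: complex) \<noteq> 0" using False by simp
  have w10: "w1 \<noteq> 0" using hden1 by (simp add: w1_def x_def)
  have w20: "w2 \<noteq> 0" using hden2 by (simp add: w2_def x_def)
  have e1: "of_nat N / (of_nat N / w1) = w1" using N0 w10 by simp
  have e2: "of_nat N / (of_nat N / w2) = w2" using N0 w20 by simp
  have hw1: "pochhammer (w1 - of_nat m) m \<noteq> 0" if "m \<le> N" for m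
    using hd1[OF that] e1 unfolding w1_def x_def by simp
  have hw2: "pochhammer (w2 - of_nat m) m \<noteq> 0" if "m \<le> N" for m
    using hd2[OF that] e2 unfolding w2_def x_def by simp
  have hxN: "pochhammer (x - of_nat N) N \<noteq> 0" using hN by (simp add: x_def)
  have hw1': "pochhammer (of_nat N - x + 1 - b - of_nat m) m \<noteq> 0" if "m \<le> N" for m
    using hw1[OF that] by (simp add: w1_def)
  have step1: "G N a b c x = pochhammer (b + x - of_nat N) N / pochhammer (x - of_nat N) N * G N (c - a) b c w1"
    using T1[of N c x b a, OF hc hxN hw1'] by (simp add: w1_def)
  have hw2': "pochhammer (of_nat N - w1 + 1 - (c - a) - of_nat m) m \<noteq> 0" if "m \<le> N" for m
  proof -
    have "of_nat N - w1 + 1 - (c - a) = w2" by (simp add: w1_def w2_def)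
    then show ?thesis using hw2[OF that] by simp
  qed
  have hw1N: "pochhammer (w1 - of_nat N) N \<noteq> 0" using hw1 by simp
  have step2: "G N b (c - a) c w1 = pochhammer (c - a + w1 - of_nat N) N / pochhammer (w1 - of_nat N) N
      * G N (c - b) (c - a) c w2"
  proof -
    have "of_nat N - w1 + 1 - (c - a) = w2" by (simp add: w1_def w2_def)
    then show ?thesis using T1[of N c w1 "c - a" b, OF hc hw1N hw2'] by simp
  qed
  have r1: "pochhammer (w1 - of_nat N) N = (-1)^N * pochhammer (b + x - of_nat N) N"
  proof -
    have u: "w1 - of_nat N = (of_nat N - x - b) - of_nat N + 1" by (simp add: w1_def)
    have v: "- (of_nat N - x - b) = b + x - of_nat N" by simp
    show ?thesis unfolding u using refl_N[of "of_nat N - x - b" N] unfolding v .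
  qed
  have r2: "pochhammer (c - a + w1 - of_nat N) N = (-1)^N * pochhammer (a + b - c + x - of_nat N) N"
  proof -
    have u: "c - a + w1 - of_nat N = (of_nat N + c - a - x - b) - of_nat N + 1" by (simp add: w1_def)
    have v: "- (of_nat N + c - a - x - b) = a + b - c + x - of_nat N" by simp
    show ?thesis unfolding u using refl_N[of "of_nat N + c - a - x - b" N] unfolding v .
  qed
  have bx0: "pochhammer (b + x - of_nat N) N \<noteq> 0" using hw1N r1 by simp
  have s: "(-1::complex)^N \<noteq> 0" by simp
  have part2: "G N a b c x = pochhammer (a + b - c + x - of_nat N) N / pochhammer (x - of_nat N) N
      * G N (c - a) (c - b) c w2"
    unfolding step1 G_sym[of N "c - a" b] step2 r1 r2 G_sym[of N "c - b"]
    using bx0 hxN s by (simp add: field_simps)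
  show ?thesis
    unfolding x_def[symmetric] w1_def[symmetric] w2_def[symmetric] F_G e1 e2
    using step1 part2 by simp
qed

end
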